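(* Let $(X,d)$ be a bounded metric space and let $M: X\to\mathbb{R}$ satisfy $d(x,y)\le M(x)\le d(x,z)+M(z)$ for all $x,y,z\in X$. Let $d_S$ be the subset distance on $\mathcal{F}(X)$ defined in the context. For any $X_1,X_2\in\mathcal{F}(X)$ with $|X_1|\le|X_2|$, there exists an injection $\chi_0: X_1\to X_2$ such that $d_S(X_1,X_2)=d_{\chi_0}(X_1,X_2)$ and $\chi_0(x)=x$ for all $x\in X_1\cap X_2$.
   Context: $\mathcal{F}(X)$ denotes the set of all finite subsets of $X$. For $A,B\in\mathcal{F}(X)$ with $|A|\le|B|$ and an injection $\chi:A\to B$, define $d_\chi(A,B)=\sum_{x\in A} d(x,\chi(x))+\sum_{y\in B\setminus\chi(A)} M(y)$. The subset distance is $d_S(A,B)=d_S(B,A)=\min\{d_\chi(A,B) : \chi:A\to B \text{ an injection}\}$ (for $|A|\le|B|$). *)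

theory Defs
  imports "HOL-Analysis.Analysis"
begin

definition injections :: "'a set \<Rightarrow> 'a set \<Rightarrow> ('a \<Rightarrow> 'a) set" where
  "injections A B = {ch. inj_on ch A \<and> ch ` A \<subseteq> B}"

definition d_chi :: "('a::metric_space \<Rightarrow> real) \<Rightarrow> ('a \<Rightarrow> 'a) \<Rightarrow> 'a set \<Rightarrow> 'a set \<Rightarrow> real" where
  "d_chi M ch A B = (\<Sum>x\<in>A. dist x (ch x)) + (\<Sum>y\<in>B - ch ` A. M y)"

definition d_S :: "('a::metric_space \<Rightarrow> real) \<Rightarrow> 'a set \<Rightarrow> 'a set \<Rightarrow> real" where
  "d_S M A B = (if card A \<le> card B
     then Min ((\<lambda>ch. d_chi M ch A B) ` injections A B)
     else Min ((\<lambda>ch. d_chi M ch B A) ` injections B A))"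

end

theory Submission
  imports Defs
begin

lemma improve_step:
  fixes M :: "'a::metric_space \<Rightarrow> real"
  assumes M: "\<And>x y z. dist x y \<le> M x \<and> M x \<le> dist x z + M z"
    and fA: "finite A" and fB: "finite B"
    and ch: "ch \<in> injections A B"
    and x: "x \<in> A" "x \<in> B" "ch x \<noteq> x"
  shows "\<exists>ch' \<in> injections A B. d_chi M ch' A B \<le> d_chi M ch A B \<and>
           {z \<in> A \<inter> B. ch' z \<noteq> z} \<subset> {z \<in> A \<inter> B. ch z \<noteq> z}"
proof -
  have inj: "inj_on ch A" and sub: "ch ` A \<subseteq> B" using ch by (auto simp: injections_def)
  show ?thesis
  proof (cases "x \<in> ch ` A")
    case True
    then obtain x' where x': "x' \<in> A" "ch x' = x" by auto
    have xx': "x' \<noteq> x" using x' x by auto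
    define ch' where "ch' = ch(x := x, x' := ch x)"
    have img: "ch' ` A = ch ` A"
    proof -
      have "ch' ` A = ch' ` (A - {x} - {x'}) \<union> {ch' x, ch' x'}" using x x' by auto
      also have "ch' ` (A - {x} - {x'}) = ch ` (A - {x} - {x'})" unfolding ch'_def by auto
      also have "{ch' x, ch' x'} = {ch x, ch x'}" unfolding ch'_def using xx' x' by auto
      also have "ch ` (A - {x} - {x'}) \<union> {ch x, ch x'} = ch ` A" using x x' by auto
      finally show ?thesis .
    qed
    have inj': "inj_on ch' A"
    proof (rule eq_card_imp_inj_on)
      show "finite A" by fact
      show "card (ch' ` A) = card A" using img card_image[OF inj] by simp
    qed
    have ch'in: "ch' \<in> injections A B" using inj' img sub by (auto simp: injections_def)
    have s1: "(\<Sum>z\<in>A. dist z (ch z)) = dist x (ch x) + dist x' (ch x') + (\<Sum>z\<in>A - {x} - {x'}. dist z (ch z))"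
      using fA x x' xx' by (simp add: sum.remove[of A x] sum.remove[of "A - {x}" x'])
    have s2: "(\<Sum>z\<in>A. dist z (ch' z)) = dist x (ch' x) + dist x' (ch' x') + (\<Sum>z\<in>A - {x} - {x'}. dist z (ch' z))"
      using fA x x' xx' by (simp add: sum.remove[of A x] sum.remove[of "A - {x}" x'])
    have s3: "(\<Sum>z\<in>A - {x} - {x'}. dist z (ch' z)) = (\<Sum>z\<in>A - {x} - {x'}. dist z (ch z))"
      by (rule sum.cong) (auto simp: ch'_def)
    have "dist x' (ch x) \<le> dist x' x + dist x (ch x)" by (rule dist_triangle)
    then have "dist x (ch' x) + dist x' (ch' x') \<le> dist x (ch x) + dist x' (ch x')"
      using xx' x' unfolding ch'_def by simp
    then have le: "d_chi M ch' A B \<le> d_chi M ch A B"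
      unfolding d_chi_def using s1 s2 s3 img by simp
    have "{z \<in> A \<inter> B. ch' z \<noteq> z} \<subseteq> {z \<in> A \<inter> B. ch z \<noteq> z} - {x}"
      unfolding ch'_def using xx' x' by auto
    then have "{z \<in> A \<inter> B. ch' z \<noteq> z} \<subset> {z \<in> A \<inter> B. ch z \<noteq> z}" using x by auto
    then show ?thesis using ch'in le by blast
  next
    case False
    define ch' where "ch' = ch(x := x)"
    have img: "ch' ` A = insert x (ch ` A - {ch x})"
    proof -
      have "ch' ` A = insert x (ch ` (A - {x}))" unfolding ch'_def using x by auto
      also have "ch ` (A - {x}) = ch ` A - {ch x}" using inj x by (simp add: inj_on_image_set_diff)
      finally show ?thesis .
    qed
    have inj': "inj_on ch' A" unfolding ch'_def using inj False
      by (auto simp: inj_on_def)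
    have ch'in: "ch' \<in> injections A B" using inj' img sub x by (auto simp: injections_def)
    have cxB: "ch x \<in> B" using sub x by auto
    define R where "R = B - ch ` A - {x}"
    have e1: "B - ch ` A = insert x R" using x False unfolding R_def by auto
    have e2: "B - ch' ` A = insert (ch x) R" using x False cxB unfolding R_def img by auto
    have xR: "x \<notin> R" and cR: "ch x \<notin> R" using x unfolding R_def by auto
    have fR: "finite R" using fB unfolding R_def by auto
    have t1: "(\<Sum>y\<in>B - ch ` A. M y) = M x + (\<Sum>y\<in>R. M y)" using e1 xR fR by simp
    have t2: "(\<Sum>y\<in>B - ch' ` A. M y) = M (ch x) + (\<Sum>y\<in>R. M y)" using e2 cR fR by simp
    have d1: "(\<Sum>z\<in>A. dist z (ch z)) = dist x (ch x) + (\<Sum>z\<in>A - {x}. dist z (ch z))"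
      using fA x by (simp add: sum.remove)
    have d2: "(\<Sum>z\<in>A. dist z (ch' z)) = dist x (ch' x) + (\<Sum>z\<in>A - {x}. dist z (ch' z))"
      using fA x by (simp add: sum.remove)
    have d3: "(\<Sum>z\<in>A - {x}. dist z (ch' z)) = (\<Sum>z\<in>A - {x}. dist z (ch z))"
      by (rule sum.cong) (auto simp: ch'_def)
    have "M (ch x) \<le> dist (ch x) x + M x" using M by blast
    then have le: "d_chi M ch' A B \<le> d_chi M ch A B"
      unfolding d_chi_def using t1 t2 d1 d2 d3 by (simp add: ch'_def dist_commute)
    have "{z \<in> A \<inter> B. ch' z \<noteq> z} \<subseteq> {z \<in> A \<inter> B. ch z \<noteq> z} - {x}"
      unfolding ch'_def by auto
    then have "{z \<in> A \<inter> B. ch' z \<noteq> z} \<subset> {z \<in> A \<inter> B. ch z \<noteq> z}" using x by auto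
    then show ?thesis using ch'in le by blast
  qed
qed

lemma improve:
  fixes M :: "'a::metric_space \<Rightarrow> real"
  assumes M: "\<And>x y z. dist x y \<le> M x \<and> M x \<le> dist x z + M z"
    and fA: "finite A" and fB: "finite B"
  shows "ch \<in> injections A B \<Longrightarrow> \<exists>ch0 \<in> injections A B. d_chi M ch0 A B \<le> d_chi M ch A B \<and>
           (\<forall>z \<in> A \<inter> B. ch0 z = z)"
proof (induction "card {z \<in> A \<inter> B. ch z \<noteq> z}" arbitrary: ch rule: less_induct)
  case less
  show ?case
  proof (cases "\<forall>z \<in> A \<inter> B. ch z = z")
    case True
    then show ?thesis using less.prems by auto
  next
    case False
    then obtain x where x: "x \<in> A" "x \<in> B" "ch x \<noteq> x" by auto
    from improve_step[OF M fA fB less.prems x] obtain ch' where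
      ch': "ch' \<in> injections A B" "d_chi M ch' A B \<le> d_chi M ch A B"
      "{z \<in> A \<inter> B. ch' z \<noteq> z} \<subset> {z \<in> A \<inter> B. ch z \<noteq> z}" by blast
    have "card {z \<in> A \<inter> B. ch' z \<noteq> z} < card {z \<in> A \<inter> B. ch z \<noteq> z}"
      using ch'(3) fA by (intro psubset_card_mono) auto
    from less.hyps[OF this ch'(1)] obtain ch0 where
      "ch0 \<in> injections A B" "d_chi M ch0 A B \<le> d_chi M ch' A B" "\<forall>z \<in> A \<inter> B. ch0 z = z" by blast
    then show ?thesis using ch'(2) order_trans by blast
  qed
qed

lemma d_chi_restrict: "d_chi M (restrict ch A) A B = d_chi M ch A B"
proof -
  have "restrict ch A ` A = ch ` A" by auto
  moreover have "(\<Sum>x\<in>A. dist x (restrict ch A x)) = (\<Sum>x\<in>A. dist x (ch x))" by auto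
  ultimately show ?thesis unfolding d_chi_def by simp
qed

theorem lemma2p1:
  fixes M :: "'a::metric_space \<Rightarrow> real" and X1 X2 :: "'a set"
  assumes "bounded (UNIV :: 'a set)"
    and "\<And>x y z. dist x y \<le> M x \<and> M x \<le> dist x z + M z"
    and "finite X1" and "finite X2"
    and "card X1 \<le> card X2"
  shows "\<exists>chi0 \<in> injections X1 X2.
           d_S M X1 X2 = d_chi M chi0 X1 X2 \<and> (\<forall>x \<in> X1 \<inter> X2. chi0 x = x)"
proof -
  let ?S = "(\<lambda>ch. d_chi M ch X1 X2) ` injections X1 X2"
  have dS: "d_S M X1 X2 = Min ?S" using assms(5) by (simp add: d_S_def)
  have "?S \<subseteq> (\<lambda>ch. d_chi M ch X1 X2) ` (X1 \<rightarrow>\<^sub>E X2)"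
  proof
    fix v assume "v \<in> ?S"
    then obtain ch where ch: "ch \<in> injections X1 X2" "v = d_chi M ch X1 X2" by auto
    then have "restrict ch X1 \<in> X1 \<rightarrow>\<^sub>E X2" by (auto simp: injections_def)
    then show "v \<in> (\<lambda>ch. d_chi M ch X1 X2) ` (X1 \<rightarrow>\<^sub>E X2)"
      using ch d_chi_restrict by (metis image_eqI)
  qed
  then have fS: "finite ?S" using assms(3,4) by (meson finite_PiE finite_imageI finite_subset)
  obtain f where f: "inj_on f X1" "f ` X1 \<subseteq> X2" using card_le_inj[OF assms(3,4,5)] by blast
  then have neS: "?S \<noteq> {}" by (auto simp: injections_def)
  from Min_in[OF fS neS] obtain ch where ch: "ch \<in> injections X1 X2" "d_chi M ch X1 X2 = Min ?S" by auto
  from improve[OF assms(2) assms(3,4) ch(1)] obtain ch0 where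
    ch0: "ch0 \<in> injections X1 X2" "d_chi M ch0 X1 X2 \<le> d_chi M ch X1 X2" "\<forall>z \<in> X1 \<inter> X2. ch0 z = z" by blast
  have "Min ?S \<le> d_chi M ch0 X1 X2" using Min_le[OF fS] ch0(1) by auto
  then have "d_S M X1 X2 = d_chi M ch0 X1 X2" using ch0(2) ch(2) dS by linarith
  then show ?thesis using ch0 by blast
qed

end
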